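(* Let $n\ge3$ and $L\cong\mathbf{2}^n$ be a Boolean lattice. Then the strong metric dimension of its zero-divisor graph is $\mathrm{sdim}_M(G(L))=2^n-2n$.
   Context: The zero-divisor graph $G(L)$ of a lattice $L$ with $0$ has as vertices the nonzero $a\in L$ such that $a\wedge b=0$ for some nonzero $b$, with distinct vertices adjacent iff their meet is $0$. In a connected graph $G$, $w$ strongly resolves $u,v$ if some shortest $u$–$w$ path contains $v$ or some shortest $v$–$w$ path contains $u$; $\mathrm{sdim}_M(G)$ is the minimum size of a set $W$ of vertices such that every pair of vertices is strongly resolved by some vertex of $W$. *)

theory Defs
  imports Main
begin

definition walk :: "'a set \<Rightarrow> ('a \<Rightarrow> 'a \<Rightarrow> bool) \<Rightarrow> 'a list \<Rightarrow> bool" where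
  "walk V E xs \<longleftrightarrow> xs \<noteq> [] \<and> set xs \<subseteq> V \<and>
     (\<forall>i. Suc i < length xs \<longrightarrow> E (xs ! i) (xs ! Suc i))"

text \<open>A shortest u-w path: a u-w walk of minimum number of vertices
  (a shortest walk is automatically a path).\<close>
definition geodesic :: "'a set \<Rightarrow> ('a \<Rightarrow> 'a \<Rightarrow> bool) \<Rightarrow> 'a \<Rightarrow> 'a \<Rightarrow> 'a list \<Rightarrow> bool" where
  "geodesic V E u w xs \<longleftrightarrow> walk V E xs \<and> hd xs = u \<and> last xs = w \<and>
     (\<forall>ys. walk V E ys \<and> hd ys = u \<and> last ys = w \<longrightarrow> length xs \<le> length ys)"

definition strongly_resolves :: "'a set \<Rightarrow> ('a \<Rightarrow> 'a \<Rightarrow> bool) \<Rightarrow> 'a \<Rightarrow> 'a \<Rightarrow> 'a \<Rightarrow> bool" where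
  "strongly_resolves V E w u v \<longleftrightarrow>
     (\<exists>p. geodesic V E u w p \<and> v \<in> set p) \<or> (\<exists>p. geodesic V E v w p \<and> u \<in> set p)"

definition strong_resolving_set :: "'a set \<Rightarrow> ('a \<Rightarrow> 'a \<Rightarrow> bool) \<Rightarrow> 'a set \<Rightarrow> bool" where
  "strong_resolving_set V E W \<longleftrightarrow> W \<subseteq> V \<and> finite W \<and>
     (\<forall>u\<in>V. \<forall>v\<in>V. u \<noteq> v \<longrightarrow> (\<exists>w\<in>W. strongly_resolves V E w u v))"

definition sdim :: "'a set \<Rightarrow> ('a \<Rightarrow> 'a \<Rightarrow> bool) \<Rightarrow> nat" where
  "sdim V E = (LEAST k. \<exists>W. strong_resolving_set V E W \<and> card W = k)"

definition zd_vertices :: "'a::{lattice,order_bot} set" where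
  "zd_vertices = {a. a \<noteq> bot \<and> (\<exists>b. b \<noteq> bot \<and> inf a b = bot)}"

definition zd_adj :: "'a::{lattice,order_bot} \<Rightarrow> 'a \<Rightarrow> bool" where
  "zd_adj a b \<longleftrightarrow> a \<in> zd_vertices \<and> b \<in> zd_vertices \<and> a \<noteq> b \<and> inf a b = bot"

end

theory Submission
  imports Defs
begin



lemma walk_single[simp]: "walk V E [x] \<longleftrightarrow> x \<in> V"
  by (simp add: walk_def)

lemma walk_Cons2[simp]: "walk V E (x # y # xs) \<longleftrightarrow> x \<in> V \<and> E x y \<and> walk V E (y # xs)"
proof -
  have "(\<forall>i. Suc i < length (x # y # xs) \<longrightarrow> E ((x # y # xs) ! i) ((x # y # xs) ! Suc i))
     \<longleftrightarrow> E x y \<and> (\<forall>i. Suc i < length (y # xs) \<longrightarrow> E ((y # xs) ! i) ((y # xs) ! Suc i))"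
    (is "?L \<longleftrightarrow> ?R")
  proof
    assume ?L
    then show ?R by (metis Suc_less_eq length_Cons nth_Cons_0 nth_Cons_Suc zero_less_Suc)
  next
    assume r: ?R
    show ?L
    proof (intro allI impI)
      fix i assume "Suc i < length (x # y # xs)"
      then show "E ((x # y # xs) ! i) ((x # y # xs) ! Suc i)"
        using r by (cases i) auto
    qed
  qed
  then show ?thesis unfolding walk_def by auto
qed

lemma walk_hd: "walk V E (x # xs) \<Longrightarrow> x \<in> V"
  by (simp add: walk_def)

lemma walk_append: "walk V E (xs @ v # zs) \<longleftrightarrow> walk V E (xs @ [v]) \<and> walk V E (v # zs)"
proof (induction xs)
  case Nil
  then show ?case using walk_hd[of V E v zs] by auto
next
  case (Cons a xs)
  note IH = Cons.IH
  show ?case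
  proof (cases xs)
    case Nil
    then show ?thesis using walk_hd[of V E v zs] by auto
  next
    case (Cons b ys)
    have "walk V E ((a # xs) @ v # zs) \<longleftrightarrow> a \<in> V \<and> E a b \<and> walk V E (xs @ v # zs)"
      using Cons by simp
    moreover have "walk V E ((a # xs) @ [v]) \<longleftrightarrow> a \<in> V \<and> E a b \<and> walk V E (xs @ [v])"
      using Cons by simp
    ultimately show ?thesis using IH by blast
  qed
qed

lemma hd_app_cons: "hd (xs @ v # ys) = hd (xs @ [v])" by (cases xs) auto




locale dgraph =
  fixes V :: "'a set" and E :: "'a \<Rightarrow> 'a \<Rightarrow> bool" and d :: "'a \<Rightarrow> 'a \<Rightarrow> nat"
  assumes d0: "\<And>u. d u u = 0"
    and d0_eq: "\<And>u v. u \<in> V \<Longrightarrow> v \<in> V \<Longrightarrow> d u v = 0 \<Longrightarrow> u = v"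
    and lip: "\<And>x y z. E x z \<Longrightarrow> y \<in> V \<Longrightarrow> d x y \<le> d z y + 1"
    and step: "\<And>u w. u \<in> V \<Longrightarrow> w \<in> V \<Longrightarrow> 0 < d u w \<Longrightarrow> \<exists>x\<in>V. E u x \<and> d x w + 1 = d u w"
begin

lemma walk_len: "walk V E xs \<Longrightarrow> last xs \<in> V \<Longrightarrow> d (hd xs) (last xs) + 1 \<le> length xs"
proof (induction xs)
  case Nil
  then show ?case by (simp add: walk_def)
next
  case (Cons x xs)
  show ?case
  proof (cases xs)
    case Nil
    then show ?thesis by (simp add: d0)
  next
    case (Cons b ys)
    with Cons.prems have "E x b" "walk V E (b # ys)" by auto
    with Cons.IH Cons.prems \<open>xs = b # ys\<close> have "d b (last xs) + 1 \<le> length xs" by auto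
    moreover have "d x (last xs) \<le> d b (last xs) + 1"
      using lip[OF \<open>E x b\<close>] Cons.prems \<open>xs = b # ys\<close> by auto
    ultimately show ?thesis using \<open>xs = b # ys\<close> by auto
  qed
qed

lemma walk_ex: "u \<in> V \<Longrightarrow> w \<in> V \<Longrightarrow> \<exists>xs. walk V E xs \<and> hd xs = u \<and> last xs = w \<and> length xs = d u w + 1"
proof (induction "d u w" arbitrary: u)
  case 0
  then have "u = w" using d0_eq by auto
  then show ?case using 0 by (intro exI[of _ "[u]"]) auto
next
  case (Suc k)
  then obtain x where x: "x \<in> V" "E u x" "d x w + 1 = d u w"
    using step[of u w] by auto
  with Suc obtain xs where xs: "walk V E xs" "hd xs = x" "last xs = w" "length xs = d x w + 1"
    by (metis add_right_cancel plus_1_eq_Suc add.commute)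
  then obtain ys where ys: "xs = x # ys" by (cases xs) auto
  show ?case
    apply (rule exI[of _ "u # xs"])
    using xs x ys Suc.prems by auto
qed

lemma concat_walk:
  assumes "u \<in> V" "v \<in> V" "w \<in> V"
  shows "\<exists>q. walk V E q \<and> hd q = u \<and> last q = w \<and> length q = d u v + d v w + 1 \<and> v \<in> set q"
proof -
  obtain p1 where p1: "walk V E p1" "hd p1 = u" "last p1 = v" "length p1 = d u v + 1"
    using walk_ex assms by blast
  obtain p2 where p2: "walk V E p2" "hd p2 = v" "last p2 = w" "length p2 = d v w + 1"
    using walk_ex assms by blast
  have e1: "p1 = butlast p1 @ [v]" using p1 append_butlast_last_id[of p1] by fastforce
  have e2: "p2 = v # tl p2" using p2 by (cases p2) auto
  let ?q = "butlast p1 @ v # tl p2"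
  have "walk V E ?q"
    apply (subst walk_append)
    using p1(1) p2(1) e1 e2 by metis
  moreover have "hd ?q = u" using hd_app_cons[of "butlast p1" v "tl p2"] e1 p1(2) by metis
  moreover have "last ?q = w"
  proof -
    have "last ?q = last (v # tl p2)" by simp
    also have "\<dots> = w" using e2 p2(3) by metis
    finally show ?thesis .
  qed
  moreover have "length ?q = d u v + d v w + 1"
    using p1(4) p2(4) by simp
  moreover have "v \<in> set ?q" by simp
  ultimately show ?thesis by blast
qed

lemma tri: "u \<in> V \<Longrightarrow> v \<in> V \<Longrightarrow> w \<in> V \<Longrightarrow> d u w \<le> d u v + d v w"
proof -
  assume a: "u \<in> V" "v \<in> V" "w \<in> V"
  obtain q where "walk V E q" "hd q = u" "last q = w" "length q = d u v + d v w + 1"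
    using concat_walk[OF a] by blast
  then show ?thesis using walk_len[of q] a by auto
qed

lemma geodesic_iff: "u \<in> V \<Longrightarrow> w \<in> V \<Longrightarrow>
   geodesic V E u w p \<longleftrightarrow> walk V E p \<and> hd p = u \<and> last p = w \<and> length p = d u w + 1"
proof -
  assume a: "u \<in> V" "w \<in> V"
  obtain q where q: "walk V E q" "hd q = u" "last q = w" "length q = d u w + 1"
    using walk_ex[OF a] by blast
  show ?thesis
  proof
    assume "geodesic V E u w p"
    then have "walk V E p" "hd p = u" "last p = w" "length p \<le> length q"
      using q unfolding geodesic_def by auto
    then show "walk V E p \<and> hd p = u \<and> last p = w \<and> length p = d u w + 1"
      using walk_len[of p] a q by fastforce
  next
    assume "walk V E p \<and> hd p = u \<and> last p = w \<and> length p = d u w + 1"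
    then show "geodesic V E u w p" unfolding geodesic_def using walk_len a by fastforce
  qed
qed

lemma on_geo:
  assumes "u \<in> V" "v \<in> V" "w \<in> V"
  shows "(\<exists>p. geodesic V E u w p \<and> v \<in> set p) \<longleftrightarrow> d u v + d v w = d u w"
proof
  assume "\<exists>p. geodesic V E u w p \<and> v \<in> set p"
  then obtain p where p: "walk V E p" "hd p = u" "last p = w" "length p = d u w + 1" "v \<in> set p"
    using geodesic_iff assms by blast
  then obtain ys zs where s: "p = ys @ v # zs" by (meson split_list)
  have w1: "walk V E (ys @ [v])" and w2: "walk V E (v # zs)" using p(1) unfolding s walk_append[of V E ys v zs] by auto
  have hu: "hd (ys @ [v]) = u" using p(2) s hd_app_cons by metis
  have "d u v + 1 \<le> length (ys @ [v])" using walk_len[OF w1] assms hu by auto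
  moreover have "d v w + 1 \<le> length (v # zs)" using walk_len[OF w2] assms p s by auto
  ultimately have "d u v + d v w \<le> d u w" using p s by auto
  then show "d u v + d v w = d u w" using tri[OF assms] by linarith
next
  assume "d u v + d v w = d u w"
  then show "\<exists>p. geodesic V E u w p \<and> v \<in> set p"
  proof -
    obtain q where q: "walk V E q" "hd q = u" "last q = w" "length q = d u v + d v w + 1" "v \<in> set q"
      using concat_walk[OF assms] by blast
    then have "geodesic V E u w q" using geodesic_iff[OF assms(1,3)] \<open>d u v + d v w = d u w\<close> by simp
    then show ?thesis using q by blast
  qed
qed

lemma sr_iff: "u \<in> V \<Longrightarrow> v \<in> V \<Longrightarrow> w \<in> V \<Longrightarrow>
  strongly_resolves V E w u v \<longleftrightarrow> d u v + d v w = d u w \<or> d v u + d u w = d v w"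
proof -
  assume a: "u \<in> V" "v \<in> V" "w \<in> V"
  show ?thesis unfolding strongly_resolves_def on_geo[OF a] on_geo[OF a(2,1,3)] ..
qed

end




lemma laminar_card:
  "finite X \<Longrightarrow> X \<noteq> {} \<Longrightarrow> F \<subseteq> Pow X \<Longrightarrow> (\<forall>T\<in>F. 2 \<le> card T) \<Longrightarrow>
   (\<forall>S\<in>F. \<forall>T\<in>F. S \<inter> T \<noteq> {} \<longrightarrow> S \<subseteq> T \<or> T \<subseteq> S) \<Longrightarrow> card F \<le> card X - 1"
proof (induction "card X" arbitrary: X F rule: less_induct)
  case less
  note fX = less.prems(1) and ne = less.prems(2) and FX = less.prems(3)
    and sz = less.prems(4) and lam = less.prems(5)
  have finF: "finite F" using FX fX by (meson finite_Pow_iff finite_subset)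
  show ?case
  proof (cases "F = {}")
    case True
    then show ?thesis by simp
  next
    case False
    define m where "m = Min (card ` F)"
    have "m \<in> card ` F" unfolding m_def using finF False by auto
    then obtain S where S: "S \<in> F" "card S = m" by auto
    have minc: "\<And>T. T \<in> F \<Longrightarrow> card S \<le> card T" using S finF m_def by auto
    have finS: "finite S" using S FX fX by (meson PowD finite_subset subsetD)
    have minS: "\<And>T. T \<in> F \<Longrightarrow> T \<subseteq> S \<Longrightarrow> T = S"
    proof -
      fix T assume "T \<in> F" "T \<subseteq> S"
      then have "card T \<le> card S" "card S \<le> card T" using finS minc card_mono by auto
      then show "T = S" using card_subset_eq[OF finS \<open>T \<subseteq> S\<close>] by simp
    qed
    have "2 \<le> card S" using sz S by auto
    then obtain x where x: "x \<in> S" by fastforce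
    have "card (S - {x}) \<ge> 1" using \<open>2 \<le> card S\<close> x finS by auto
    then have "S - {x} \<noteq> {}" by (metis card.empty not_one_le_zero)
    then obtain y where y: "y \<in> S" "y \<noteq> x" by blast
    have yT: "\<And>T. T \<in> F \<Longrightarrow> y \<in> T \<Longrightarrow> S \<subseteq> T"
    proof -
      fix T assume T: "T \<in> F" "y \<in> T"
      then have "S \<inter> T \<noteq> {}" using y by blast
      then have "S \<subseteq> T \<or> T \<subseteq> S" using lam S T by blast
      then show "S \<subseteq> T" using minS[OF T(1)] by blast
    qed
    define F' where "F' = (\<lambda>T. T - {y}) ` (F - {S})"
    define X' where "X' = X - {y}"
    have yX: "y \<in> X" using S FX y by auto
    have cX': "card X' = card X - 1" unfolding X'_def using yX fX by auto
    have cX1: "card X \<ge> 2"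
      using S FX fX \<open>2 \<le> card S\<close> by (meson PowD card_mono le_trans subsetD)
    have inj: "inj_on (\<lambda>T. T - {y}) (F - {S})"
    proof (rule inj_onI)
      fix T T' assume T: "T \<in> F - {S}" and T': "T' \<in> F - {S}" and eq: "T - {y} = T' - {y}"
      show "T = T'"
      proof (cases "y \<in> T \<longleftrightarrow> y \<in> T'")
        case True
        then show ?thesis using eq by blast
      next
        case False
        then show ?thesis
        proof (cases "y \<in> T")
          case True
          then have "S \<subseteq> T" using yT T by auto
          then have "x \<in> T'" using x y eq by blast
          then have "S \<inter> T' \<noteq> {}" using x by blast
          then have "S \<subseteq> T' \<or> T' \<subseteq> S" using lam T' S by blast
          then have "y \<in> T'" using minS T' y by blast
          then show ?thesis using False True by blast
        next
          case f2: False
          then have "y \<in> T'" using False by auto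
          then have "S \<subseteq> T'" using yT T' by auto
          then have "x \<in> T" using x y eq by blast
          then have "S \<inter> T \<noteq> {}" using x by blast
          then have "S \<subseteq> T \<or> T \<subseteq> S" using lam T S by blast
          then have "y \<in> T" using minS T y by blast
          then show ?thesis using f2 by blast
        qed
      qed
    qed
    have cF: "card F = card F' + 1"
      unfolding F'_def using card_image[OF inj] finF S
      by (metis card_Suc_Diff1 Suc_eq_plus1)
    have "card F' \<le> card X' - 1"
    proof (rule less.hyps)
      show "card X' < card X" using cX' cX1 by auto
      show "finite X'" using fX X'_def by auto
      show "X' \<noteq> {}" using X'_def x y S FX by auto
      show "F' \<subseteq> Pow X'" using FX unfolding F'_def X'_def by auto
      show "\<forall>T\<in>F'. 2 \<le> card T"
      proof
        fix T' assume "T' \<in> F'"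
        then obtain T where T: "T \<in> F" "T \<noteq> S" "T' = T - {y}" unfolding F'_def by auto
        have finT: "finite T" using T FX fX by (meson PowD finite_subset subsetD)
        show "2 \<le> card T'"
        proof (cases "y \<in> T")
          case True
          then have "S \<subset> T" using yT T by auto
          then have "card S < card T" using finT by (simp add: psubset_card_mono)
          then show ?thesis using T True finT \<open>2 \<le> card S\<close> by auto
        next
          case False
          then show ?thesis using T sz by auto
        qed
      qed
      show "\<forall>A\<in>F'. \<forall>B\<in>F'. A \<inter> B \<noteq> {} \<longrightarrow> A \<subseteq> B \<or> B \<subseteq> A"
        unfolding F'_def using lam by blast
    qed
    then show ?thesis using cF cX' cX1 by auto
  qed
qed




definition D :: "nat \<Rightarrow> nat set \<Rightarrow> nat set \<Rightarrow> nat" where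
  "D n A B = (if A = B then 0 else if A \<inter> B = {} then 1 else if A \<union> B = {..<n} then 3 else 2)"

lemma D0[simp]: "D n A A = 0" by (simp add: D_def)
lemma D1: "A \<noteq> B \<Longrightarrow> A \<inter> B = {} \<Longrightarrow> D n A B = 1" by (simp add: D_def)
lemma D2: "A \<noteq> B \<Longrightarrow> A \<inter> B \<noteq> {} \<Longrightarrow> A \<union> B \<noteq> {..<n} \<Longrightarrow> D n A B = 2" by (simp add: D_def)
lemma D3: "A \<noteq> B \<Longrightarrow> A \<inter> B \<noteq> {} \<Longrightarrow> A \<union> B = {..<n} \<Longrightarrow> D n A B = 3" by (simp add: D_def)

lemma D_mmd:
  assumes "A \<inter> B \<noteq> {}" "\<not> A \<subseteq> B" "\<not> B \<subseteq> A" "B \<subseteq> {..<n}"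
    and "D n A B + D n B C = D n A C"
  shows "C = B"
proof (rule ccontr)
  assume "C \<noteq> B"
  have "A \<noteq> B" using assms by auto
  have dab: "D n A B \<ge> 2" using assms(1) \<open>A \<noteq> B\<close> by (simp add: D_def)
  have dbc: "D n B C \<ge> 1" using \<open>C \<noteq> B\<close> by (auto simp: D_def)
  have dac: "D n A C \<le> 3" by (simp add: D_def)
  have "D n A B = 2" "D n B C = 1" "D n A C = 3" using dab dbc dac assms(5) by linarith+
  then have "B \<inter> C = {}" "A \<union> C = {..<n}"
    by (auto simp: D_def split: if_splits)
  then have "B \<subseteq> A" using assms(4) by blast
  then show False using assms(3) by blast
qed

lemma third_elem: "3 \<le> (n::nat) \<Longrightarrow> \<exists>c<n. c \<noteq> a \<and> c \<noteq> b"
  by (rule exI[of _ "if a \<noteq> 0 \<and> b \<noteq> 0 then 0 else if a \<noteq> 1 \<and> b \<noteq> 1 then 1 else 2"]) auto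

definition Sing :: "nat \<Rightarrow> nat set set" where "Sing n = (\<lambda>i. {i}) ` {..<n}"
definition Ch :: "nat \<Rightarrow> nat set set" where "Ch n = (\<lambda>k. {..<k}) ` {2..<n}"
definition TT :: "nat \<Rightarrow> nat set set" where "TT n = {{}, {..<n}} \<union> Sing n \<union> Ch n"

definition good :: "nat \<Rightarrow> nat set \<Rightarrow> nat set \<Rightarrow> bool" where
  "good n A B \<longleftrightarrow> (\<exists>C \<in> Pow {..<n} - TT n. D n A B + D n B C = D n A C \<or> D n B A + D n A C = D n B C)"

lemma good_sym: "good n A B \<Longrightarrow> good n B A"
  unfolding good_def by blast

lemma notTT: "C \<subseteq> {..<n} \<Longrightarrow> C \<noteq> {} \<Longrightarrow> C \<noteq> {..<n} \<Longrightarrow> (\<And>i. C \<noteq> {i}) \<Longrightarrow>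
   (\<And>k. 2 \<le> k \<Longrightarrow> k < n \<Longrightarrow> C \<noteq> {..<k}) \<Longrightarrow> C \<in> Pow {..<n} - TT n"
proof -
  assume a: "C \<subseteq> {..<n}" "C \<noteq> {}" "C \<noteq> {..<n}" "\<And>i. C \<noteq> {i}"
    "\<And>k. 2 \<le> k \<Longrightarrow> k < n \<Longrightarrow> C \<noteq> {..<k}"
  have "C \<notin> (\<lambda>i. {i}) ` {..<n}" using a(4) by blast
  moreover have "C \<notin> (\<lambda>k. {..<k}) ` {2..<n}"
  proof
    assume "C \<in> (\<lambda>k. {..<k}) ` {2..<n}"
    then obtain k where "k \<in> {2..<n}" "C = {..<k}" by blast
    then show False using a(5)[of k] by simp
  qed
  ultimately show ?thesis unfolding TT_def Sing_def Ch_def using a(1,2,3) by blast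
qed

lemma neq_wit: "x \<in> S \<Longrightarrow> x \<notin> T \<Longrightarrow> S \<noteq> T" by blast
lemma neq_wit2: "x \<notin> S \<Longrightarrow> x \<in> T \<Longrightarrow> S \<noteq> T" by blast
lemma int_wit: "x \<in> S \<Longrightarrow> x \<in> T \<Longrightarrow> S \<inter> T \<noteq> {}" by blast
lemma two_elems: "x \<in> C \<Longrightarrow> y \<in> C \<Longrightarrow> x \<noteq> y \<Longrightarrow> C \<noteq> {i}" by blast

lemma case_a:
  assumes n: "3 \<le> n" and "a < n" "b < n" "a \<noteq> b" "b \<noteq> n - 1"
  shows "good n {a} {b}"
proof -
  obtain c where c: "c < n" "c \<noteq> a" "c \<noteq> b" using third_elem[OF n] by blast
  let ?C = "{..<n} - {b}"
  have m: "n - 1 \<in> ?C" using assms by simp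
  have CT: "?C \<in> Pow {..<n} - TT n"
  proof (rule notTT)
    show "?C \<noteq> {}" using assms by (intro neq_wit[of a]) simp_all
    show "?C \<noteq> {..<n}" using assms by (intro neq_wit2[of b]) simp_all
    show "?C \<noteq> {i}" for i using c assms by (intro two_elems[of a _ c]) simp_all
    show "?C \<noteq> {..<k}" if "k < n" for k using m that by (intro neq_wit[of "n - 1"]) simp_all
  qed simp
  have "D n {a} {b} = 1" using assms by (intro D1) auto
  moreover have "D n {b} ?C = 1" using assms by (intro D1 neq_wit[of b]) auto
  moreover have "D n {a} ?C = 2" using assms c
    by (intro D2 neq_wit2[of c] int_wit[of a] neq_wit2[of b]) auto
  ultimately show ?thesis unfolding good_def using CT by (intro bexI[of _ ?C]) auto
qed

lemma case_b:
  assumes n: "3 \<le> n" and "2 \<le> k" "k < n" "a < k"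
  shows "good n {a} {..<k}"
proof -
  obtain c where c: "c < n" "c \<noteq> a" "c \<noteq> n - 1" using third_elem[OF n] by blast
  have "\<exists>e<k. e \<noteq> a" using assms by (intro exI[of _ "if a = 0 then 1 else 0"]) auto
  then obtain e where e: "e < k" "e \<noteq> a" by blast
  let ?C = "{..<n} - {a}"
  have m: "n - 1 \<in> ?C" using assms by simp
  have CT: "?C \<in> Pow {..<n} - TT n"
  proof (rule notTT)
    show "?C \<noteq> {}" using m by blast
    show "?C \<noteq> {..<n}" using assms by (intro neq_wit2[of a]) simp_all
    show "?C \<noteq> {i}" for i using c assms m by (intro two_elems[of "n - 1" _ c]) simp_all
    show "?C \<noteq> {..<j}" if "j < n" for j using m that by (intro neq_wit[of "n - 1"]) simp_all
  qed simp
  have "D n {..<k} {a} = 2" using assms e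
    by (intro D2 neq_wit[of e] int_wit[of a] neq_wit2[of "n - 1"]) auto
  moreover have "D n {a} ?C = 1" using assms by (intro D1 neq_wit[of a]) auto
  moreover have "D n {..<k} ?C = 3" using assms e
    by (intro D3 neq_wit[of a] int_wit[of e]) auto
  ultimately show ?thesis unfolding good_def using CT by (intro bexI[of _ ?C]) auto
qed

lemma case_c:
  assumes n: "3 \<le> n" and "2 \<le> k" "k < n" "k \<le> a" "a < n"
  shows "good n {a} {..<k}"
proof -
  let ?C = "insert 0 {k..<n}"
  have CT: "?C \<in> Pow {..<n} - TT n"
  proof (rule notTT)
    show "?C \<noteq> {}" by blast
    show "?C \<noteq> {..<n}" using assms by (intro neq_wit2[of 1]) simp_all
    show "?C \<noteq> {i}" for i using assms by (intro two_elems[of 0 _ a]) simp_all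
    show "?C \<noteq> {..<j}" if "2 \<le> j" for j using that assms by (intro neq_wit2[of 1]) simp_all
  qed (use assms in auto)
  have "D n {..<k} {a} = 1" using assms by (intro D1 neq_wit2[of a]) auto
  moreover have "D n {a} ?C = 2" using assms
    by (intro D2 neq_wit2[of 0] int_wit[of a] neq_wit2[of 1]) auto
  moreover have "D n {..<k} ?C = 3" using assms
    by (intro D3 neq_wit[of 1] int_wit[of 0]) auto
  ultimately show ?thesis unfolding good_def using CT by (intro bexI[of _ ?C]) auto
qed

lemma case_d:
  assumes n: "3 \<le> n" and "2 \<le> j" "j < k" "k < n"
  shows "good n {..<j} {..<k}"
proof -
  let ?C = "{j..<n}"
  have CT: "?C \<in> Pow {..<n} - TT n"
  proof (rule notTT)
    show "?C \<noteq> {}" using assms by (intro neq_wit[of j]) simp_all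
    show "?C \<noteq> {..<n}" using assms by (intro neq_wit2[of 0]) simp_all
    show "?C \<noteq> {i}" for i using assms by (intro two_elems[of j _ "Suc j"]) simp_all
    show "?C \<noteq> {..<i}" if "2 \<le> i" for i using that assms by (intro neq_wit2[of 0]) simp_all
  qed auto
  have "D n {..<k} {..<j} = 2" using assms
    by (intro D2 neq_wit[of j] int_wit[of 0] neq_wit2[of "n - 1"]) auto
  moreover have "D n {..<j} ?C = 1" using assms by (intro D1 neq_wit[of 0]) auto
  moreover have "D n {..<k} ?C = 3" using assms
    by (intro D3 neq_wit[of 0] int_wit[of j]) auto
  ultimately show ?thesis unfolding good_def using CT by (intro bexI[of _ ?C]) auto
qed

lemma all_good:
  assumes n: "3 \<le> n" and A: "A \<in> Sing n \<union> Ch n" and B: "B \<in> Sing n \<union> Ch n" and "A \<noteq> B"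
  shows "good n A B"
proof -
  consider (ss) a b where "A = {a}" "B = {b}" "a < n" "b < n"
    | (sc) a k where "A = {a}" "B = {..<k}" "a < n" "2 \<le> k" "k < n"
    | (cs) a k where "B = {a}" "A = {..<k}" "a < n" "2 \<le> k" "k < n"
    | (cc) j k where "A = {..<j}" "B = {..<k}" "2 \<le> j" "j < n" "2 \<le> k" "k < n"
    using A B unfolding Sing_def Ch_def by auto
  then show ?thesis
  proof cases
    case ss
    then have "a \<noteq> b" using \<open>A \<noteq> B\<close> by auto
    show ?thesis
    proof (cases "b = n - 1")
      case True
      then have "a \<noteq> n - 1" using \<open>a \<noteq> b\<close> by auto
      then show ?thesis using case_a[OF n \<open>b < n\<close> \<open>a < n\<close>] \<open>a \<noteq> b\<close> ss good_sym by auto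
    next
      case False
      then show ?thesis using case_a[OF n \<open>a < n\<close> \<open>b < n\<close> \<open>a \<noteq> b\<close>] ss by auto
    qed
  next
    case sc
    then show ?thesis using case_b[OF n, of k a] case_c[OF n, of k a] by (cases "a < k") auto
  next
    case cs
    then show ?thesis using case_b[OF n, of k a] case_c[OF n, of k a] good_sym by (cases "a < k") auto
  next
    case cc
    then have "j \<noteq> k" using \<open>A \<noteq> B\<close> by auto
    then show ?thesis using case_d[OF n, of j k] case_d[OF n, of k j] cc good_sym
      by (cases "j < k") auto
  qed
qed




locale blat =
  fixes n :: nat and f :: "'a::{lattice,order_bot} \<Rightarrow> nat set"
  assumes n3: "3 \<le> n" and fbij: "bij_betw f UNIV (Pow {..<n})"
    and hom: "\<And>x y. f (inf x y) = f x \<inter> f y"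
begin

lemma finj: "f x = f y \<Longrightarrow> x = y"
  using fbij unfolding bij_betw_def inj_on_def by blast

lemma fsub: "f x \<subseteq> {..<n}"
  using fbij unfolding bij_betw_def by blast

lemma fsurj: "A \<subseteq> {..<n} \<Longrightarrow> \<exists>x. f x = A"
proof -
  assume "A \<subseteq> {..<n}"
  then have "A \<in> f ` UNIV" using bij_betw_imp_surj_on[OF fbij] by auto
  then show ?thesis by auto
qed

lemma fbot: "f bot = {}"
proof -
  obtain z where z: "f z = {}" using fsurj by blast
  have "f (inf bot z) = f bot \<inter> f z" by (rule hom)
  moreover have "inf bot z = bot" by (meson antisym bot_least inf_le1)
  ultimately show ?thesis using z by simp
qed

lemma fbot_iff: "f x = {} \<longleftrightarrow> x = bot"
  using finj[of x bot] fbot by auto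

lemma V_iff: "x \<in> zd_vertices \<longleftrightarrow> f x \<noteq> {} \<and> f x \<noteq> {..<n}"
proof
  assume "x \<in> zd_vertices"
  then obtain b where b: "x \<noteq> bot" "b \<noteq> bot" "inf x b = bot" unfolding zd_vertices_def by blast
  have fb: "f x \<inter> f b = {}" using b(3) hom[of x b] fbot by simp
  have fb2: "f b \<noteq> {}" using b(2) fbot_iff[of b] by simp
  have "f x \<noteq> {..<n}"
  proof
    assume "f x = {..<n}"
    then have "f b \<subseteq> f x" using fsub[of b] by simp
    then show False using fb fb2 by blast
  qed
  moreover have "f x \<noteq> {}" using b(1) fbot_iff[of x] by simp
  ultimately show "f x \<noteq> {} \<and> f x \<noteq> {..<n}" by simp
next
  assume a: "f x \<noteq> {} \<and> f x \<noteq> {..<n}"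
  obtain b where b: "f b = {..<n} - f x" using fsurj[of "{..<n} - f x"] by auto
  have "f b \<noteq> {}"
  proof
    assume "f b = {}"
    then have "{..<n} \<subseteq> f x" using b by blast
    then show False using a fsub[of x] by blast
  qed
  then have nb: "b \<noteq> bot" using fbot_iff[of b] by simp
  have "f (inf x b) = {}" using b hom[of x b] by blast
  then have ib: "inf x b = bot" using fbot_iff[of "inf x b"] by simp
  have nx: "x \<noteq> bot" using a fbot_iff[of x] by simp
  show "x \<in> zd_vertices" unfolding zd_vertices_def using nb ib nx by blast
qed

lemma adj_iff: "zd_adj x y \<longleftrightarrow> x \<in> zd_vertices \<and> y \<in> zd_vertices \<and> f x \<noteq> f y \<and> f x \<inter> f y = {}"
proof -
  have 1: "(x \<noteq> y) = (f x \<noteq> f y)" using finj by blast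
  have 2: "(inf x y = bot) = (f x \<inter> f y = {})" using fbot_iff[of "inf x y"] hom[of x y] by simp
  show ?thesis by (simp add: zd_adj_def 1 2)
qed

definition dd :: "'a \<Rightarrow> 'a \<Rightarrow> nat" where "dd x y = D n (f x) (f y)"

lemma dg: "dgraph (zd_vertices :: 'a set) zd_adj dd"
proof
  show "dd u u = 0" for u by (simp add: dd_def)
  show "u = v" if "dd u v = 0" for u v
    using that finj by (auto simp: dd_def D_def split: if_splits)
  show "dd x y \<le> dd z y + 1" if xz: "zd_adj x z" and y: "y \<in> zd_vertices" for x y z
  proof -
    have z: "f z \<noteq> {}" "f x \<inter> f z = {}" using xz adj_iff V_iff by auto
    have le3: "D n (f x) (f y) \<le> 3" by (simp add: D_def)
    consider "f z = f y" | "f z \<noteq> f y" "f z \<inter> f y = {}" | "f z \<noteq> f y" "f z \<inter> f y \<noteq> {}" by blast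
    then show ?thesis
    proof cases
      case 1
      have "D n (f x) (f y) \<le> 1" using z 1 by (auto simp: D_def)
      then show ?thesis using 1 by (simp add: dd_def)
    next
      case 2
      have "f x \<union> f y \<noteq> {..<n}"
      proof
        assume "f x \<union> f y = {..<n}"
        then have "f z \<subseteq> f x \<union> f y" using fsub[of z] by simp
        then show False using z 2 by blast
      qed
      then have "D n (f x) (f y) \<le> 2" by (auto simp: D_def)
      moreover have "D n (f z) (f y) = 1" using 2 by (rule D1)
      ultimately show ?thesis by (simp add: dd_def)
    next
      case 3
      then have "D n (f z) (f y) \<ge> 2" by (auto simp: D_def)
      then show ?thesis using le3 by (simp add: dd_def)
    qed
  qed
  show "\<exists>x\<in>zd_vertices. zd_adj u x \<and> dd x w + 1 = dd u w"
    if u: "u \<in> zd_vertices" and w: "w \<in> zd_vertices" and pos: "0 < dd u w" for u w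
  proof -
    have fu: "f u \<noteq> {}" "f u \<noteq> {..<n}" "f u \<subseteq> {..<n}" using u V_iff fsub by auto
    have fw: "f w \<noteq> {}" "f w \<noteq> {..<n}" "f w \<subseteq> {..<n}" using w V_iff fsub by auto
    have ne: "f u \<noteq> f w" using pos by (auto simp: dd_def)
    consider "f u \<inter> f w = {}" | "f u \<inter> f w \<noteq> {}" "f u \<union> f w \<noteq> {..<n}"
      | "f u \<inter> f w \<noteq> {}" "f u \<union> f w = {..<n}" by blast
    then show ?thesis
    proof cases
      case 1
      then have "zd_adj u w" using adj_iff u w ne by blast
      moreover have "dd u w = 1" unfolding dd_def using ne 1 by (rule D1)
      ultimately show ?thesis using w by (auto simp: dd_def)
    next
      case 2
      obtain x where x: "f x = {..<n} - (f u \<union> f w)" using fsurj[of "{..<n} - (f u \<union> f w)"] by auto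
      have xne: "f x \<noteq> {}" using 2 fu fw x by blast
      have xV: "x \<in> zd_vertices" unfolding V_iff using xne x fu by blast
      have "zd_adj u x" unfolding adj_iff using u xV x xne by blast
      moreover have "dd x w = 1" unfolding dd_def using x xne by (intro D1) blast+
      moreover have "dd u w = 2" unfolding dd_def using ne 2 by (rule D2)
      ultimately show ?thesis using xV by auto
    next
      case 3
      obtain x where x: "f x = {..<n} - f u" using fsurj[of "{..<n} - f u"] by auto
      have xne: "f x \<noteq> {}" using fu x by blast
      have xV: "x \<in> zd_vertices" unfolding V_iff using xne x fu by blast
      have "zd_adj u x" unfolding adj_iff using u xV x xne by blast
      moreover have "dd x w = 2" unfolding dd_def
      proof (rule D2)
        show "f x \<noteq> f w" using 3 x by blast
        show "f x \<inter> f w \<noteq> {}" using 3 x xne by blast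
        show "f x \<union> f w \<noteq> {..<n}" using 3 x fw by blast
      qed
      moreover have "dd u w = 3" unfolding dd_def using ne 3 by (rule D3)
      ultimately show ?thesis using xV by auto
    qed
  qed
qed

lemma sr: "u \<in> zd_vertices \<Longrightarrow> v \<in> zd_vertices \<Longrightarrow> w \<in> zd_vertices \<Longrightarrow>
  strongly_resolves (zd_vertices :: 'a set) zd_adj w u v \<longleftrightarrow>
  D n (f u) (f v) + D n (f v) (f w) = D n (f u) (f w) \<or> D n (f v) (f u) + D n (f u) (f w) = D n (f v) (f w)"
  using dgraph.sr_iff[OF dg] unfolding dd_def by blast

lemma fV: "f ` zd_vertices = Pow {..<n} - {{}, {..<n}}"
proof
  show "f ` zd_vertices \<subseteq> Pow {..<n} - {{}, {..<n}}" using V_iff fsub by auto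
  show "Pow {..<n} - {{}, {..<n}} \<subseteq> f ` zd_vertices"
  proof
    fix A assume "A \<in> Pow {..<n} - {{}, {..<n}}"
    then obtain x where "f x = A" "A \<noteq> {}" "A \<noteq> {..<n}" using fsurj[of A] by auto
    then show "A \<in> f ` zd_vertices" using V_iff by blast
  qed
qed

lemma finj_on: "inj_on f S" using finj by (meson inj_onI)

lemma cardV: "card (zd_vertices :: 'a set) = 2 ^ n - 2" and finV: "finite (zd_vertices :: 'a set)"
proof -
  have ne: "{} \<noteq> {..<n}" using n3 by (intro neq_wit2[of 0]) auto
  have "card (Pow {..<n} - {{}, {..<n}}) = 2 ^ n - 2"
    using ne by (subst card_Diff_subset) (auto simp: card_Pow)
  then show "card (zd_vertices :: 'a set) = 2 ^ n - 2" using fV card_image[OF finj_on] by metis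
  have "finite (f ` zd_vertices)" using fV by simp
  then show "finite (zd_vertices :: 'a set)" using finite_imageD finj_on by blast
qed

lemma lower:
  assumes W: "strong_resolving_set (zd_vertices :: 'a set) zd_adj W"
  shows "2 ^ n - 2 * n \<le> card W"
proof -
  let ?V = "zd_vertices :: 'a set"
  define I where "I = ?V - W"
  have WV: "W \<subseteq> ?V" and finW: "finite W" using W unfolding strong_resolving_set_def by auto
  have cVI: "card ?V = card W + card I"
    unfolding I_def using WV finV by (metis card_Diff_subset card_mono add_diff_inverse_nat
        finite_subset not_less)
  have lam: "f u \<inter> f v = {} \<or> f u \<subseteq> f v \<or> f v \<subseteq> f u" if uv: "u \<in> I" "v \<in> I" "u \<noteq> v" for u v
  proof (rule ccontr)
    assume c: "\<not> (f u \<inter> f v = {} \<or> f u \<subseteq> f v \<or> f v \<subseteq> f u)"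
    have uV: "u \<in> ?V" "v \<in> ?V" using uv I_def by auto
    then obtain w where w: "w \<in> W" "strongly_resolves ?V zd_adj w u v"
      using W uv unfolding strong_resolving_set_def by blast
    have wV: "w \<in> ?V" using w WV by auto
    have "D n (f u) (f v) + D n (f v) (f w) = D n (f u) (f w) \<or>
          D n (f v) (f u) + D n (f u) (f w) = D n (f v) (f w)" using sr[OF uV wV] w by blast
    then show False
    proof
      assume "D n (f u) (f v) + D n (f v) (f w) = D n (f u) (f w)"
      then have "f w = f v" using c fsub[of v] by (intro D_mmd[of "f u" "f v" n]) auto
      then have "w = v" by (rule finj)
      then show False using w uv I_def by auto
    next
      assume "D n (f v) (f u) + D n (f u) (f w) = D n (f v) (f w)"
      then have "f w = f u" using c fsub[of u] by (intro D_mmd[of "f v" "f u" n]) auto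
      then have "w = u" by (rule finj)
      then show False using w uv I_def by auto
    qed
  qed
  define G where "G = f ` I"
  have cG: "card G = card I" unfolding G_def using card_image[OF finj_on] by blast
  define Big where "Big = {A \<in> G. 2 \<le> card A}"
  have GV: "G \<subseteq> Pow {..<n} - {{}, {..<n}}" unfolding G_def I_def using fV by blast
  have GSB: "G \<subseteq> Sing n \<union> Big"
  proof
    fix A assume A: "A \<in> G"
    show "A \<in> Sing n \<union> Big"
    proof (cases "2 \<le> card A")
      case True then show ?thesis using A Big_def by blast
    next
      case False
      have finA: "finite A" using A GV finite_subset by blast
      have "A \<noteq> {}" using A GV by blast
      then have "card A \<noteq> 0" using finA by simp
      then have "card A = 1" using False by linarith
      then obtain i where "A = {i}" using card_1_singletonE by blast
      then show ?thesis using A GV unfolding Sing_def by blast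
    qed
  qed
  have cS: "card (Sing n) \<le> n" unfolding Sing_def by (metis card_image_le card_lessThan finite_lessThan)
  have cB: "card Big \<le> n - 2"
  proof -
    have fullB: "{..<n} \<notin> Big" using GV Big_def by blast
    have "card (insert {..<n} Big) \<le> card {..<n::nat} - 1"
    proof (rule laminar_card)
      show "finite {..<n::nat}" by simp
      show "{..<n::nat} \<noteq> {}" using n3 by (intro neq_wit[of 0]) auto
      show "insert {..<n} Big \<subseteq> Pow {..<n}" using GV Big_def by blast
      show "\<forall>T\<in>insert {..<n} Big. 2 \<le> card T" using n3 Big_def by auto
      show "\<forall>S\<in>insert {..<n} Big. \<forall>T\<in>insert {..<n} Big. S \<inter> T \<noteq> {} \<longrightarrow> S \<subseteq> T \<or> T \<subseteq> S"
      proof (intro ballI impI)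
        fix S T assume S: "S \<in> insert {..<n} Big" and T: "T \<in> insert {..<n} Big" and ST: "S \<inter> T \<noteq> {}"
        show "S \<subseteq> T \<or> T \<subseteq> S"
        proof (cases "S = {..<n} \<or> T = {..<n}")
          case True
          then show ?thesis using S T GV Big_def by blast
        next
          case False
          then have "S \<in> G" "T \<in> G" using S T Big_def by auto
          then obtain u v where "u \<in> I" "v \<in> I" "S = f u" "T = f v" unfolding G_def by blast
          then show ?thesis using lam[of u v] ST by (cases "u = v") auto
        qed
      qed
    qed
    moreover have "finite Big" using GV Big_def by (metis (no_types, lifting) finite_Pow_iff finite_lessThan
          finite_subset Diff_subset mem_Collect_eq subsetI subset_trans)
    ultimately show ?thesis using fullB by simp
  qed
  have finG: "finite G" unfolding G_def I_def using finV by simp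
  have "finite (Sing n \<union> Big)" unfolding Sing_def Big_def using finG by simp
  then have "card G \<le> card (Sing n \<union> Big)" using GSB by (rule card_mono)
  also have "\<dots> \<le> card (Sing n) + card Big" by (rule card_Un_le)
  finally have "card I \<le> n + (n - 2)" using cS cB cG by linarith
  then have "card I + 2 \<le> 2 * n" using n3 by linarith
  moreover have "card W + card I + 2 = 2 ^ n"
  proof -
    have "(2::nat) ^ n \<ge> 2 ^ 1" using n3 by (intro power_increasing) auto
    then show ?thesis using cVI cardV by simp
  qed
  ultimately show ?thesis by linarith
qed

end



context blat begin

lemma cardTT: "card (TT n) = 2 * n" and TTsub: "TT n \<subseteq> Pow {..<n}"
proof -
  have ne: "{} \<noteq> {..<n}" using n3 by (intro neq_wit2[of 0]) auto
  have cfull: "card {..<n} = n" by simp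
  have sing_card: "\<forall>A\<in>Sing n. card A = 1" unfolding Sing_def by auto
  have ch_card: "\<forall>A\<in>Ch n. 2 \<le> card A \<and> card A < n" unfolding Ch_def by auto
  have cS: "card (Sing n) = n" unfolding Sing_def
    by (subst card_image) (auto intro: inj_onI)
  have injC: "inj_on (\<lambda>k. {..<k::nat}) {2..<n}"
    by (rule inj_onI) (metis card_lessThan)
  have cC: "card (Ch n) = n - 2" unfolding Ch_def by (subst card_image[OF injC]) simp
  have d1: "{{}, {..<n}} \<inter> Sing n = {}"
  proof -
    have "card {} \<noteq> 1" "card {..<n} \<noteq> 1" using n3 by auto
    then show ?thesis using sing_card by blast
  qed
  have d2: "({{}, {..<n}} \<union> Sing n) \<inter> Ch n = {}"
  proof -
    have "card {} < 2" "\<not> card {..<n} < n" by auto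
    then show ?thesis using sing_card ch_card by fastforce
  qed
  have fS: "finite (Sing n)" unfolding Sing_def by simp
  have fC: "finite (Ch n)" unfolding Ch_def by simp
  have "card ({{}, {..<n}} \<union> Sing n) = 2 + n"
    using card_Un_disjoint[OF _ fS d1] ne cS by simp
  then have "card (TT n) = 2 + n + (n - 2)" unfolding TT_def
    using card_Un_disjoint[OF _ fC d2] fS cC by simp
  then show "card (TT n) = 2 * n" using n3 by simp
  show "TT n \<subseteq> Pow {..<n}" unfolding TT_def Sing_def Ch_def by auto
qed

lemma upper: "\<exists>W. strong_resolving_set (zd_vertices :: 'a set) zd_adj W \<and> card W = 2 ^ n - 2 * n"
proof -
  let ?V = "zd_vertices :: 'a set"
  define W0 where "W0 = {x. f x \<notin> TT n}"
  have fW: "f ` W0 = Pow {..<n} - TT n"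
  proof
    show "f ` W0 \<subseteq> Pow {..<n} - TT n" unfolding W0_def using fsub by auto
    show "Pow {..<n} - TT n \<subseteq> f ` W0"
    proof
      fix A assume A: "A \<in> Pow {..<n} - TT n"
      then obtain x where "f x = A" using fsurj[of A] by auto
      then show "A \<in> f ` W0" using A unfolding W0_def by blast
    qed
  qed
  have "card (Pow {..<n} - TT n) = 2 ^ n - 2 * n"
    using TTsub cardTT by (subst card_Diff_subset) (auto simp: card_Pow intro: finite_subset)
  then have cW: "card W0 = 2 ^ n - 2 * n" using fW card_image[OF finj_on] by metis
  have WV: "W0 \<subseteq> ?V"
  proof
    fix x assume "x \<in> W0"
    then have "f x \<noteq> {}" "f x \<noteq> {..<n}" unfolding W0_def TT_def by auto
    then show "x \<in> ?V" using V_iff by blast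
  qed
  have finW: "finite W0" using WV finV finite_subset by blast
  have res: "\<exists>w\<in>W0. strongly_resolves ?V zd_adj w u v"
    if uv: "u \<in> ?V" "v \<in> ?V" "u \<noteq> v" for u v
  proof (cases "u \<in> W0")
    case True
    have "strongly_resolves ?V zd_adj u u v" using sr[OF uv(1,2) uv(1)] by simp
    then show ?thesis using True by blast
  next
    case nu: False
    show ?thesis
    proof (cases "v \<in> W0")
      case True
      have "strongly_resolves ?V zd_adj v u v" using sr[OF uv(1,2) uv(2)] by simp
      then show ?thesis using True by blast
    next
      case False
      have fu: "f u \<in> Sing n \<union> Ch n" using nu uv(1) V_iff unfolding W0_def TT_def by auto
      have fv: "f v \<in> Sing n \<union> Ch n" using False uv(2) V_iff unfolding W0_def TT_def by auto
      have "f u \<noteq> f v" using uv(3) finj by blast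
      then have "good n (f u) (f v)" using all_good[OF n3 fu fv] by blast
      then obtain C where C: "C \<in> Pow {..<n} - TT n"
        "D n (f u) (f v) + D n (f v) C = D n (f u) C \<or> D n (f v) (f u) + D n (f u) C = D n (f v) C"
        unfolding good_def by blast
      obtain w where w: "f w = C" using C(1) fsurj[of C] by auto
      have wW: "w \<in> W0" using C(1) w unfolding W0_def by simp
      then have "strongly_resolves ?V zd_adj w u v" using sr[OF uv(1,2)] WV C(2) w by auto
      then show ?thesis using wW by blast
    qed
  qed
  have "strong_resolving_set ?V zd_adj W0"
    unfolding strong_resolving_set_def using WV finW res by blast
  then show ?thesis using cW by blast
qed

end

theorem mainTheorem12:
  fixes n :: nat
  assumes "n \<ge> 3"
    and "\<exists>f :: 'a::{lattice,order_bot} \<Rightarrow> nat set.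
           bij_betw f UNIV (Pow {..<n}) \<and> (\<forall>x y. f (inf x y) = f x \<inter> f y)"
  shows "sdim (zd_vertices :: 'a set) zd_adj = 2 ^ n - 2 * n"
proof -
  obtain f :: "'a \<Rightarrow> nat set" where f: "bij_betw f UNIV (Pow {..<n})" "\<forall>x y. f (inf x y) = f x \<inter> f y"
    using assms(2) by blast
  interpret B: blat n f using assms(1) f by unfold_locales auto
  show ?thesis unfolding sdim_def
  proof (rule Least_equality)
    show "\<exists>W. strong_resolving_set (zd_vertices :: 'a set) zd_adj W \<and> card W = 2 ^ n - 2 * n"
      by (rule B.upper)
    show "2 ^ n - 2 * n \<le> k" if "\<exists>W. strong_resolving_set (zd_vertices :: 'a set) zd_adj W \<and> card W = k" for k
      using that B.lower by blast
  qed
qed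


end
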